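(* Let $G$ be a connected graph with $n\ge 2$ vertices and diameter $D$. Then $$EE(G) > e^{\sqrt[D]{n-1}} + (n-1) - \sqrt[D]{n-1}.$$
   Context: All graphs are finite, simple and undirected. For a graph $G$ with adjacency matrix $A(G)$ having eigenvalues $\lambda_1\ge\cdots\ge\lambda_n$, the Estrada index is $EE(G)=\sum_{i=1}^n e^{\lambda_i}$. The diameter $D$ is the maximum over all pairs of vertices of the length of a shortest path between them. *)

theory Defs
  imports Complex_Main "Jordan_Normal_Form.Char_Poly"
begin

definition simple_graph :: "nat \<Rightarrow> (nat \<Rightarrow> nat \<Rightarrow> bool) \<Rightarrow> bool" where
  "simple_graph n E \<longleftrightarrow> (\<forall>u<n. \<forall>v<n. E u v \<longleftrightarrow> E v u) \<and> (\<forall>u<n. \<not> E u u)"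

definition adj_mat :: "nat \<Rightarrow> (nat \<Rightarrow> nat \<Rightarrow> bool) \<Rightarrow> real mat" where
  "adj_mat n E = mat n n (\<lambda>(i,j). if E i j then 1 else 0)"

text \<open>Estrada index: sum of exp over the eigenvalues (with multiplicity), i.e. over
  the roots of the characteristic polynomial of the adjacency matrix (all real,
  since the matrix is real symmetric).\<close>
definition estrada_index :: "nat \<Rightarrow> (nat \<Rightarrow> nat \<Rightarrow> bool) \<Rightarrow> real" where
  "estrada_index n E = (\<Sum>\<mu>\<in># proots (char_poly (adj_mat n E)). exp \<mu>)"

definition walk :: "nat \<Rightarrow> (nat \<Rightarrow> nat \<Rightarrow> bool) \<Rightarrow> nat \<Rightarrow> nat \<Rightarrow> nat \<Rightarrow> bool" where
  "walk n E u v k \<longleftrightarrow> (\<exists>p :: nat \<Rightarrow> nat. p 0 = u \<and> p k = v \<and> (\<forall>i\<le>k. p i < n)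
      \<and> (\<forall>i<k. E (p i) (p (Suc i))))"

definition connected_graph :: "nat \<Rightarrow> (nat \<Rightarrow> nat \<Rightarrow> bool) \<Rightarrow> bool" where
  "connected_graph n E \<longleftrightarrow> (\<forall>u<n. \<forall>v<n. \<exists>k. walk n E u v k)"

text \<open>Shortest-path distance (length of a shortest walk = shortest path).\<close>
definition graph_dist :: "nat \<Rightarrow> (nat \<Rightarrow> nat \<Rightarrow> bool) \<Rightarrow> nat \<Rightarrow> nat \<Rightarrow> nat" where
  "graph_dist n E u v = (LEAST k. walk n E u v k)"

definition diameter :: "nat \<Rightarrow> (nat \<Rightarrow> nat \<Rightarrow> bool) \<Rightarrow> nat" where
  "diameter n E = Max {graph_dist n E u v | u v. u < n \<and> v < n}"

end

theory Submission
  imports Defs "Jordan_Normal_Form.Schur_Decomposition"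
begin

interpretation ofr_poly: map_poly_comm_ring_hom "complex_of_real" ..

definition mtrace :: "'a::comm_ring_1 mat \<Rightarrow> 'a" where
  "mtrace M = (\<Sum>i<dim_row M. M $$ (i,i))"

lemma mtrace_mult_comm:
  assumes "A \<in> carrier_mat n m" "B \<in> carrier_mat m n"
  shows "mtrace (A * B) = mtrace (B * A)"
proof -
  have "mtrace (A*B) = (\<Sum>i<n. \<Sum>j<m. A$$(i,j) * B$$(j,i))"
    using assms by (auto simp: mtrace_def scalar_prod_def atLeast0LessThan intro!: sum.cong) 
  also have "\<dots> = (\<Sum>j<m. \<Sum>i<n. B$$(j,i) * A$$(i,j))"
    by (subst sum.swap) (simp add: mult.commute)
  also have "\<dots> = mtrace (B*A)"
    using assms by (auto simp: mtrace_def scalar_prod_def atLeast0LessThan intro!: sum.cong) 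
  finally show ?thesis .
qed

lemma mtrace_similar:
  assumes "similar_mat_wit A B P Q"
  shows "mtrace A = mtrace B"
proof -
  obtain n where c: "A \<in> carrier_mat n n" "B \<in> carrier_mat n n" "P \<in> carrier_mat n n" "Q \<in> carrier_mat n n"
    and PQ: "Q * P = 1\<^sub>m n" and A: "A = P * B * Q"
    using assms unfolding similar_mat_wit_def Let_def by auto
  have "mtrace A = mtrace (P * (B * Q))" using A c by (simp add: assoc_mult_mat)
  also have "\<dots> = mtrace ((B * Q) * P)" using c by (intro mtrace_mult_comm) auto
  also have "(B * Q) * P = B * (Q * P)" using c by (simp add: assoc_mult_mat)
  also have "\<dots> = B" using PQ c by simp
  finally show ?thesis .
qed

lemma upper_triangular_pow:
  assumes B: "B \<in> carrier_mat n n" and ut: "upper_triangular B"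
  shows "upper_triangular (B ^\<^sub>m k) \<and> (\<forall>i<n. (B ^\<^sub>m k) $$ (i,i) = (B $$ (i,i)) ^ k)"
proof (induction k)
  case 0
  then show ?case using B by (auto simp: upper_triangular_def)
next
  case (Suc k)
  let ?C = "B ^\<^sub>m k"
  have C: "?C \<in> carrier_mat n n" using B by simp
  have utC: "\<And>i j. i < n \<Longrightarrow> j < i \<Longrightarrow> ?C $$ (i,j) = 0" using Suc C unfolding upper_triangular_def by auto
  have utB: "\<And>i j. i < n \<Longrightarrow> j < i \<Longrightarrow> B $$ (i,j) = 0" using ut B unfolding upper_triangular_def by auto
  have entry: "(B ^\<^sub>m Suc k) $$ (i,j) = (\<Sum>l<n. ?C $$ (i,l) * B $$ (l,j))" if "i < n" "j < n" for i j
    using that C B by (simp add: scalar_prod_def atLeast0LessThan)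
  have "(B ^\<^sub>m Suc k) $$ (i,j) = 0" if "i < n" "j < i" for i j
  proof -
    have "(\<Sum>l<n. ?C $$ (i,l) * B $$ (l,j)) = 0"
    proof (rule sum.neutral, intro ballI)
      fix l assume "l \<in> {..<n}"
      then show "?C $$ (i,l) * B $$ (l,j) = 0"
        using utC utB that by (cases "l < i") auto
    qed
    then show ?thesis using entry that by simp
  qed
  moreover have "(B ^\<^sub>m Suc k) $$ (i,i) = (B $$ (i,i)) ^ Suc k" if "i < n" for i
  proof -
    have "(\<Sum>l<n. ?C $$ (i,l) * B $$ (l,i)) = (\<Sum>l<n. if l = i then ?C $$ (i,i) * B $$ (i,i) else 0)"
    proof (rule sum.cong[OF refl])
      fix l assume "l \<in> {..<n}"
      then show "?C $$ (i,l) * B $$ (l,i) = (if l = i then ?C $$ (i,i) * B $$ (i,i) else 0)"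
        using utC utB that by (cases "l < i"; cases "l = i") auto
    qed
    then show ?thesis using entry that Suc by (simp add: power_commutes)
  qed
  ultimately show ?case using B unfolding upper_triangular_def by auto
qed

lemma map_poly_ofr_prod: "map_poly complex_of_real (\<Prod>r\<leftarrow>rs. [:-r,1:]) = (\<Prod>r\<leftarrow>rs. [:-complex_of_real r,1:])"
  by (induction rs) (simp_all only: list.map prod_list.Cons prod_list.Nil ofr_poly.hom_mult, simp_all)

lemma map_poly_ofr_inj: "map_poly complex_of_real p = map_poly complex_of_real q \<Longrightarrow> p = q"
  by (metis of_real_hom.coeff_map_poly_hom of_real_eq_iff poly_eqI)

lemma real_sym_eigenvalue_real:
  fixes A :: "real mat"
  assumes A: "A \<in> carrier_mat n n" and sym: "\<And>i j. i < n \<Longrightarrow> j < n \<Longrightarrow> A$$(i,j) = A$$(j,i)"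
    and ev: "eigenvalue (map_mat complex_of_real A) a"
  shows "cnj a = a"
proof -
  let ?Ac = "map_mat complex_of_real A"
  obtain v where v: "v \<in> carrier_vec n" "v \<noteq> 0\<^sub>v n" "?Ac *\<^sub>v v = a \<cdot>\<^sub>v v"
    using ev A unfolding eigenvalue_def eigenvector_def by auto
  define s where "s = (\<Sum>i<n. cnj (v$i) * (?Ac *\<^sub>v v)$i)"
  define t where "t = (\<Sum>i<n. cnj (v$i) * v$i)"
  have s2: "s = (\<Sum>i<n. \<Sum>j<n. cnj (v$i) * of_real (A$$(i,j)) * v$j)"
    unfolding s_def using A v(1)
    by (auto simp: scalar_prod_def atLeast0LessThan sum_distrib_left mult.assoc intro!: sum.cong)
  have "cnj s = (\<Sum>i<n. \<Sum>j<n. v$i * of_real (A$$(i,j)) * cnj (v$j))"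
    unfolding s2 by (simp add: cnj_sum)
  also have "\<dots> = (\<Sum>j<n. \<Sum>i<n. v$i * of_real (A$$(i,j)) * cnj (v$j))"
    by (rule sum.swap)
  also have "\<dots> = s"
    unfolding s2 by (intro sum.cong refl) (simp add: sym mult.commute mult.left_commute)
  finally have cs: "cnj s = s" .
  have sa: "s = a * t"
    unfolding s_def t_def using v by (simp add: sum_distrib_left mult.left_commute)
  have t: "t = of_real (\<Sum>i<n. (cmod (v$i))^2)"
    unfolding t_def of_real_sum complex_norm_square by (simp add: mult.commute)
  obtain i where i: "i < n" "v$i \<noteq> 0"
    using v(1,2) by (metis carrier_vecD eq_vecI index_zero_vec(1) index_zero_vec(2))
  have "(\<Sum>i<n. (cmod (v$i))^2) > 0"
    by (rule sum_pos2[of _ i]) (use i in auto)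
  hence t0: "t \<noteq> 0" using t by (metis of_real_eq_0_iff order_less_irrefl)
  have "cnj t = t" using t by (metis complex_cnj_complex_of_real)
  hence "cnj a * t = a * t" using cs sa by (metis complex_cnj_mult)
  thus ?thesis using t0 by simp
qed

lemma real_sym_spectrum:
  fixes A :: "real mat"
  assumes A: "A \<in> carrier_mat n n" and sym: "\<And>i j. i < n \<Longrightarrow> j < n \<Longrightarrow> A$$(i,j) = A$$(j,i)"
  shows "\<exists>rs. length rs = n \<and> char_poly A = (\<Prod>r\<leftarrow>rs. [:-r,1:]) \<and>
     (\<forall>k. mtrace (A ^\<^sub>m k) = (\<Sum>r\<leftarrow>rs. r^k))"
proof -
  let ?Ac = "map_mat complex_of_real A"
  have Ac: "?Ac \<in> carrier_mat n n" using A by simp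
  obtain as where cp: "char_poly ?Ac = (\<Prod>a\<leftarrow>as. [:-a,1:])" and len: "length as = n"
    using char_poly_factorized[OF Ac] by auto
  obtain B P Q where sch: "schur_decomposition ?Ac as = (B,P,Q)" by (cases "schur_decomposition ?Ac as") auto
  from schur_decomposition[OF Ac cp sch] have sim: "similar_mat_wit ?Ac B P Q"
    and ut: "upper_triangular B" and diag: "diag_mat B = as" by auto
  have Bc: "B \<in> carrier_mat n n" using similar_mat_witD2[OF Ac sim] by auto
  have real: "cnj a = a" if "a \<in> set as" for a
  proof -
    have "poly (char_poly ?Ac) a = 0" unfolding cp using that
      by (auto simp: poly_prod_list prod_list_zero_iff)
    hence "eigenvalue ?Ac a" using eigenvalue_root_char_poly[OF Ac] by simp
    from real_sym_eigenvalue_real[OF A sym this] show ?thesis .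
  qed
  define rs where "rs = map Re as"
  have as_eq: "as = map complex_of_real rs"
    unfolding rs_def using real by (induction as) (auto simp: complex_eq_iff)
  have "map_poly complex_of_real (char_poly A) = map_poly complex_of_real (\<Prod>r\<leftarrow>rs. [:-r,1:])"
    unfolding of_real_hom.char_poly_hom[OF A, symmetric] cp map_poly_ofr_prod as_eq
    by (simp add: o_def)
  hence cpA: "char_poly A = (\<Prod>r\<leftarrow>rs. [:-r,1:])" by (rule map_poly_ofr_inj)
  have tr: "mtrace (A ^\<^sub>m k) = (\<Sum>r\<leftarrow>rs. r^k)" for k
  proof -
    have "complex_of_real (mtrace (A ^\<^sub>m k)) = mtrace (map_mat complex_of_real (A ^\<^sub>m k))"
      using A by (simp add: mtrace_def)
    also have "map_mat complex_of_real (A ^\<^sub>m k) = ?Ac ^\<^sub>m k"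
      by (rule of_real_hom.mat_hom_pow[OF A])
    also have "mtrace (?Ac ^\<^sub>m k) = mtrace (B ^\<^sub>m k)"
      by (rule mtrace_similar[OF similar_mat_wit_pow[OF sim]])
    also have "\<dots> = (\<Sum>i<n. (B $$ (i,i))^k)"
      using upper_triangular_pow[OF Bc ut, of k] Bc by (simp add: mtrace_def)
    also have "\<dots> = (\<Sum>a\<leftarrow>as. a^k)"
    proof -
      have "as = map (\<lambda>i. B $$ (i,i)) [0..<n]" using diag Bc by (simp add: diag_mat_def)
      thus ?thesis by (simp add: sum_list_distinct_conv_sum_set atLeast0LessThan[symmetric] o_def)
    qed
    also have "\<dots> = complex_of_real (\<Sum>r\<leftarrow>rs. r^k)"
      unfolding as_eq by (induction rs) auto
    finally show ?thesis by simp
  qed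
  have "length rs = n" using len by (simp add: rs_def)
  thus ?thesis using cpA tr by blast
qed



lemma pow_mat_add:
  assumes A: "A \<in> carrier_mat n n"
  shows "A ^\<^sub>m (a + b) = A ^\<^sub>m a * A ^\<^sub>m b"
proof (induction b)
  case 0 then show ?case using A by simp
next
  case (Suc b)
  have "A ^\<^sub>m (a + Suc b) = (A ^\<^sub>m a * A ^\<^sub>m b) * A" using Suc by simp
  also have "\<dots> = A ^\<^sub>m a * (A ^\<^sub>m b * A)" using A by (simp add: assoc_mult_mat[of _ n n _ n _ n])
  finally show ?case by simp
qed

lemma adj_carrier: "adj_mat n E \<in> carrier_mat n n"
  by (simp add: adj_mat_def)

lemma adj_index: "i < n \<Longrightarrow> j < n \<Longrightarrow> adj_mat n E $$ (i,j) = (if E i j then 1 else 0)"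
  by (simp add: adj_mat_def)

lemma adj_pow_nonneg:
  "i < n \<Longrightarrow> j < n \<Longrightarrow> 0 \<le> (adj_mat n E ^\<^sub>m k) $$ (i,j)"
proof (induction k arbitrary: i j)
  case 0 then show ?case using adj_carrier[of n E] by (simp add: one_mat_def)
next
  case (Suc k)
  have "(adj_mat n E ^\<^sub>m Suc k) $$ (i,j) = (\<Sum>l<n. (adj_mat n E ^\<^sub>m k) $$ (i,l) * adj_mat n E $$ (l,j))"
    using Suc.prems adj_carrier[of n E] by (simp add: scalar_prod_def atLeast0LessThan)
  also have "\<dots> \<ge> 0" using Suc by (intro sum_nonneg) (auto simp: adj_index)
  finally show ?case by simp
qed

lemma adj_pow_sym:
  assumes sg: "simple_graph n E"
  shows "i < n \<Longrightarrow> j < n \<Longrightarrow> (adj_mat n E ^\<^sub>m k) $$ (i,j) = (adj_mat n E ^\<^sub>m k) $$ (j,i)"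
proof (induction k arbitrary: i j)
  case 0 then show ?case using adj_carrier[of n E] by (simp add: one_mat_def)
next
  case (Suc k)
  let ?A = "adj_mat n E"
  have A: "?A \<in> carrier_mat n n" by (rule adj_carrier)
  have "(?A ^\<^sub>m Suc k) $$ (i,j) = (\<Sum>l<n. (?A ^\<^sub>m k) $$ (i,l) * ?A $$ (l,j))"
    using Suc.prems A by (simp add: scalar_prod_def atLeast0LessThan)
  also have "\<dots> = (\<Sum>l<n. ?A $$ (j,l) * (?A ^\<^sub>m k) $$ (l,i))"
    using Suc sg by (intro sum.cong refl) (auto simp: adj_index simple_graph_def)
  also have "\<dots> = (?A * ?A ^\<^sub>m k) $$ (j,i)"
    using Suc.prems A by (simp add: scalar_prod_def atLeast0LessThan)
  also have "?A * ?A ^\<^sub>m k = ?A ^\<^sub>m (1 + k)"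
  proof -
    have eq: "?A ^\<^sub>m (1+k) = ?A ^\<^sub>m 1 * ?A ^\<^sub>m k" by (rule pow_mat_add[OF A])
    have A1: "?A ^\<^sub>m 1 = ?A" using A by simp
    show ?thesis by (simp only: eq A1)
  qed
  finally show ?case by simp
qed

definition Fw :: "nat \<Rightarrow> (nat \<Rightarrow> nat \<Rightarrow> bool) \<Rightarrow> nat \<Rightarrow> nat \<Rightarrow> real" where
  "Fw n E k v = (\<Sum>u<n. (adj_mat n E ^\<^sub>m k) $$ (v,u))"

lemma Fw_split:
  assumes v: "v < n"
  shows "Fw n E (a + b) v = (\<Sum>u<n. (adj_mat n E ^\<^sub>m a) $$ (v,u) * Fw n E b u)"
proof -
  let ?A = "adj_mat n E"
  have A: "?A \<in> carrier_mat n n" by (rule adj_carrier)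
  have "Fw n E (a+b) v = (\<Sum>w<n. (?A ^\<^sub>m a * ?A ^\<^sub>m b) $$ (v,w))"
    unfolding Fw_def pow_mat_add[OF A] ..
  also have "\<dots> = (\<Sum>w<n. \<Sum>u<n. (?A ^\<^sub>m a) $$ (v,u) * (?A ^\<^sub>m b) $$ (u,w))"
    using v A by (intro sum.cong refl) (simp add: scalar_prod_def atLeast0LessThan)
  also have "\<dots> = (\<Sum>u<n. \<Sum>w<n. (?A ^\<^sub>m a) $$ (v,u) * (?A ^\<^sub>m b) $$ (u,w))"
    by (rule sum.swap)
  also have "\<dots> = (\<Sum>u<n. (?A ^\<^sub>m a) $$ (v,u) * Fw n E b u)"
    by (simp add: Fw_def sum_distrib_left)
  finally show ?thesis .
qed

lemma Fw_0: "v < n \<Longrightarrow> Fw n E 0 v = 1"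
proof -
  assume v: "v < n"
  have "Fw n E 0 v = (\<Sum>u<n. if u = v then 1 else 0)"
    unfolding Fw_def using v adj_carrier[of n E] by (intro sum.cong refl) (auto simp: one_mat_def)
  also have "\<dots> = 1" using v by simp
  finally show ?thesis .
qed

lemma Fw_Suc:
  assumes v: "v < n"
  shows "Fw n E (Suc k) v = (\<Sum>u\<in>{u. u < n \<and> E v u}. Fw n E k u)"
proof -
  let ?A = "adj_mat n E"
  have A: "?A \<in> carrier_mat n n" by (rule adj_carrier)
  have A1: "?A ^\<^sub>m 1 = ?A" using A by simp
  have "Fw n E (Suc k) v = (\<Sum>u<n. ?A $$ (v,u) * Fw n E k u)"
    using Fw_split[OF v, of E 1 k] A1 by simp
  also have "\<dots> = (\<Sum>u<n. if E v u then Fw n E k u else 0)"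
    using v by (intro sum.cong refl) (simp add: adj_index)
  also have "\<dots> = (\<Sum>u\<in>{u\<in>{..<n}. E v u}. Fw n E k u)"
    by (rule sum.inter_filter[symmetric]) simp
  also have "{u\<in>{..<n}. E v u} = {u. u < n \<and> E v u}" by auto
  finally show ?thesis .
qed

lemma Fw_nonneg: "v < n \<Longrightarrow> 0 \<le> Fw n E k v"
  unfolding Fw_def by (intro sum_nonneg) (auto intro: adj_pow_nonneg)

definition Ball_w :: "nat \<Rightarrow> (nat \<Rightarrow> nat \<Rightarrow> bool) \<Rightarrow> nat \<Rightarrow> nat \<Rightarrow> nat set" where
  "Ball_w n E v k = {u. u < n \<and> (\<exists>j\<le>k. walk n E v u j)}"

lemma walk_0: "walk n E v u 0 \<longleftrightarrow> v = u \<and> v < n"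
  unfolding walk_def by auto

lemma walk_Suc_D:
  assumes "walk n E v u (Suc j)"
  shows "\<exists>w. w < n \<and> E v w \<and> walk n E w u j"
proof -
  obtain p where p: "p 0 = v" "p (Suc j) = u" "\<forall>i\<le>Suc j. p i < n" "\<forall>i<Suc j. E (p i) (p (Suc i))"
    using assms unfolding walk_def by blast
  have "walk n E (p 1) u j"
    unfolding walk_def using p by (intro exI[of _ "\<lambda>i. p (Suc i)"]) auto
  moreover have "p 1 < n" "E v (p 1)" using p by auto
  ultimately show ?thesis by blast
qed

lemma walk_1: "u < n \<Longrightarrow> v < n \<Longrightarrow> E u v \<Longrightarrow> walk n E u v 1"
  unfolding walk_def by (intro exI[of _ "\<lambda>i. if i = 0 then u else v"]) auto

lemma Ball_w_finite: "finite (Ball_w n E v k)"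
  unfolding Ball_w_def by auto

lemma Fw_ball:
  assumes sg: "simple_graph n E" and v: "v < n"
  shows "Fw n E (Suc k) v \<ge> real (card (Ball_w n E v (Suc k))) - 1"
  using v
proof (induction k arbitrary: v)
  case 0
  let ?N = "{u. u < n \<and> E v u}"
  have "Fw n E (Suc 0) v = (\<Sum>u\<in>?N. 1)"
    using Fw_Suc[OF "0.prems", of E 0] Fw_0 by simp
  also have "\<dots> = real (card ?N)" by simp
  finally have F: "Fw n E (Suc 0) v = real (card ?N)" .
  have "Ball_w n E v (Suc 0) \<subseteq> insert v ?N"
  proof
    fix u assume "u \<in> Ball_w n E v (Suc 0)"
    then obtain j where j: "j \<le> 1" "walk n E v u j" unfolding Ball_w_def by auto
    show "u \<in> insert v ?N"
    proof (cases j)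
      case 0 then show ?thesis using j walk_0 by auto
    next
      case (Suc j') 
      with j have "j' = 0" by simp
      with j Suc walk_Suc_D[of n E v u 0] show ?thesis by (auto simp: walk_0)
    qed
  qed
  hence "card (Ball_w n E v (Suc 0)) \<le> card (insert v ?N)" by (intro card_mono) auto
  also have "\<dots> \<le> Suc (card ?N)" by (simp add: card_insert_le_m1)
  finally show ?case using F by simp
next
  case (Suc k)
  let ?N = "{u. u < n \<and> E v u}"
  have F: "Fw n E (Suc (Suc k)) v = (\<Sum>u\<in>?N. Fw n E (Suc k) u)"
    using Fw_Suc[OF Suc.prems] .
  have vin: "v \<in> Ball_w n E u (Suc k)" if "u \<in> ?N" for u
    using that Suc.prems sg walk_1[of u n v E] unfolding Ball_w_def simple_graph_def by auto
  have a: "(\<Sum>u\<in>?N. Fw n E (Suc k) u) \<ge> (\<Sum>u\<in>?N. real (card (Ball_w n E u (Suc k) - {v})))"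
  proof (rule sum_mono)
    fix u assume u: "u \<in> ?N"
    have "card (Ball_w n E u (Suc k) - {v}) = card (Ball_w n E u (Suc k)) - 1"
      using vin[OF u] Ball_w_finite by (simp add: card_Diff_singleton)
    moreover have "card (Ball_w n E u (Suc k)) \<ge> 1"
      using vin[OF u] Ball_w_finite by (metis card_0_eq empty_iff less_one not_le)
    ultimately show "real (card (Ball_w n E u (Suc k) - {v})) \<le> Fw n E (Suc k) u"
      using Suc.IH[of u] u by (simp add: of_nat_diff)
  qed
  have b: "(\<Sum>u\<in>?N. real (card (Ball_w n E u (Suc k) - {v}))) \<ge> real (card (\<Union>u\<in>?N. Ball_w n E u (Suc k) - {v}))"
  proof -
    have "card (\<Union>u\<in>?N. Ball_w n E u (Suc k) - {v}) \<le> (\<Sum>u\<in>?N. card (Ball_w n E u (Suc k) - {v}))"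
      by (rule card_UN_le) auto
    thus ?thesis by (simp flip: of_nat_sum)
  qed
  have c: "Ball_w n E v (Suc (Suc k)) \<subseteq> insert v (\<Union>u\<in>?N. Ball_w n E u (Suc k) - {v})"
  proof
    fix x assume "x \<in> Ball_w n E v (Suc (Suc k))"
    then obtain j where j: "j \<le> Suc (Suc k)" "walk n E v x j" "x < n" unfolding Ball_w_def by auto
    show "x \<in> insert v (\<Union>u\<in>?N. Ball_w n E u (Suc k) - {v})"
    proof (cases "x = v")
      case False
      show ?thesis
      proof (cases j)
        case 0 then show ?thesis using j False walk_0 by auto
      next
        case (Suc j')
        then obtain w where w: "w < n" "E v w" "walk n E w x j'" using j walk_Suc_D by blast
        then have "x \<in> Ball_w n E w (Suc k)" unfolding Ball_w_def using j Suc by auto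
        then show ?thesis using w False by auto
      qed
    qed simp
  qed
  define U where "U = (\<Union>u\<in>?N. Ball_w n E u (Suc k) - {v})"
  have finU: "finite U" unfolding U_def by (auto simp: Ball_w_finite)
  have "card (Ball_w n E v (Suc (Suc k))) \<le> card (insert v U)"
    using c finU unfolding U_def[symmetric] by (intro card_mono) auto
  also have "\<dots> \<le> Suc (card U)"
    using finU by (cases "v \<in> U") (simp_all add: card_insert_if)
  finally show ?case using F a b unfolding U_def by linarith
qed



lemma sum_sq_cs:
  fixes x :: "'a \<Rightarrow> real"
  assumes "finite S"
  shows "(\<Sum>u\<in>S. x u)^2 \<le> real (card S) * (\<Sum>u\<in>S. (x u)^2)"
proof -
  have "0 \<le> (\<Sum>u\<in>S. \<Sum>w\<in>S. (x u - x w)^2)" by (intro sum_nonneg) auto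
  also have "(\<Sum>u\<in>S. \<Sum>w\<in>S. (x u - x w)^2) =
      (\<Sum>u\<in>S. \<Sum>w\<in>S. (x u)^2) + (\<Sum>u\<in>S. \<Sum>w\<in>S. (x w)^2) - 2 * (\<Sum>u\<in>S. \<Sum>w\<in>S. x u * x w)"
    by (simp add: power2_diff sum.distrib sum_subtractf sum_distrib_left algebra_simps)
  also have "(\<Sum>u\<in>S. \<Sum>w\<in>S. x u * x w) = (\<Sum>u\<in>S. x u)^2"
    by (simp add: power2_eq_square sum_product)
  also have "(\<Sum>u\<in>S. \<Sum>w\<in>S. (x u)^2) = real (card S) * (\<Sum>u\<in>S. (x u)^2)"
    by (simp add: sum_distrib_left mult.commute)
  also have "(\<Sum>u\<in>S. \<Sum>w\<in>S. (x w)^2) = real (card S) * (\<Sum>u\<in>S. (x u)^2)"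
    by simp
  finally show ?thesis by simp
qed

lemma diam_ball:
  assumes conn: "connected_graph n E" and D: "D = diameter n E"
    and v: "v < n" and u: "u < n"
  shows "\<exists>j\<le>D. walk n E v u j"
proof -
  have ex: "\<exists>k. walk n E v u k" using conn v u unfolding connected_graph_def by auto
  have w: "walk n E v u (graph_dist n E v u)"
    unfolding graph_dist_def using ex by (rule LeastI_ex)
  have fin: "finite {graph_dist n E u v | u v. u < n \<and> v < n}"
    using finite_image_set2[of "\<lambda>u. u < n" "\<lambda>v. v < n" "graph_dist n E"] by simp
  have "graph_dist n E v u \<in> {graph_dist n E u v | u v. u < n \<and> v < n}" using u v by blast
  hence "graph_dist n E v u \<le> D"
    unfolding D diameter_def using fin by (rule Max_ge[rotated])
  thus ?thesis using w by blast
qed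

lemma diam_pos:
  assumes conn: "connected_graph n E" and D: "D = diameter n E" and n: "n \<ge> 2"
  shows "D \<ge> 1"
proof -
  have ex: "\<exists>k. walk n E 0 1 k" using conn n unfolding connected_graph_def by auto
  have w: "walk n E 0 1 (graph_dist n E 0 1)"
    unfolding graph_dist_def using ex by (rule LeastI_ex)
  hence "graph_dist n E 0 1 \<noteq> 0" using walk_0[of n E 0 1] by (metis zero_neq_one)
  have fin: "finite {graph_dist n E u v | u v. u < n \<and> v < n}"
    using finite_image_set2[of "\<lambda>u. u < n" "\<lambda>v. v < n" "graph_dist n E"] by simp
  have "graph_dist n E 0 1 \<in> {graph_dist n E u v | u v. u < n \<and> v < n}" using n by force
  hence "graph_dist n E 0 1 \<le> D"
    unfolding D diameter_def using fin by (rule Max_ge[rotated])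
  thus ?thesis using \<open>graph_dist n E 0 1 \<noteq> 0\<close> by simp
qed

lemma Fw_diam:
  assumes sg: "simple_graph n E" and conn: "connected_graph n E" and D: "D = diameter n E"
    and n: "n \<ge> 2" and v: "v < n"
  shows "Fw n E D v \<ge> real n - 1"
proof -
  obtain k where k: "D = Suc k" using diam_pos[OF conn D n] by (cases D) auto
  have "Ball_w n E v D = {..<n}"
    unfolding Ball_w_def using diam_ball[OF conn D v] by auto
  thus ?thesis using Fw_ball[OF sg v, of k] k by simp
qed

lemma Fw_chunk:
  assumes c: "\<And>u. u < n \<Longrightarrow> Fw n E D u \<ge> c" and c0: "c \<ge> 0" and v: "v < n"
  shows "Fw n E (j * D) v \<ge> c ^ j"
  using v
proof (induction j arbitrary: v)
  case 0 then show ?case using Fw_0 by simp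
next
  case (Suc j)
  have "c * c ^ j \<le> Fw n E D v * c ^ j"
    using c[OF Suc.prems] c0 by (intro mult_right_mono) auto
  also have "\<dots> = (\<Sum>u<n. (adj_mat n E ^\<^sub>m D) $$ (v,u) * c ^ j)"
    by (simp add: Fw_def sum_distrib_right)
  also have "\<dots> \<le> (\<Sum>u<n. (adj_mat n E ^\<^sub>m D) $$ (v,u) * Fw n E (j * D) u)"
    using Suc adj_pow_nonneg[OF Suc.prems] by (intro sum_mono mult_left_mono) auto
  also have "\<dots> = Fw n E (Suc j * D) v"
    using Fw_split[OF Suc.prems, of E D "j * D"] by (simp add: add.commute)
  finally show ?case by simp
qed

lemma trace_pow_nonneg: "0 \<le> mtrace (adj_mat n E ^\<^sub>m k)"
  unfolding mtrace_def using adj_carrier[of n E] by (auto intro!: sum_nonneg adj_pow_nonneg)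

lemma trace_adj: "simple_graph n E \<Longrightarrow> mtrace (adj_mat n E ^\<^sub>m 1) = 0"
  unfolding mtrace_def using adj_carrier[of n E] by (auto simp: adj_index simple_graph_def)

lemma trace_double:
  assumes sg: "simple_graph n E" and n: "n \<ge> 1"
  shows "mtrace (adj_mat n E ^\<^sub>m (m + m)) \<ge> (\<Sum>v<n. (Fw n E m v)^2) / real n"
proof -
  let ?A = "adj_mat n E"
  have A: "?A \<in> carrier_mat n n" by (rule adj_carrier)
  have "mtrace (?A ^\<^sub>m (m + m)) = (\<Sum>v<n. (?A ^\<^sub>m m * ?A ^\<^sub>m m) $$ (v,v))"
    unfolding mtrace_def pow_mat_add[OF A] using A by simp
  also have "\<dots> = (\<Sum>v<n. \<Sum>u<n. ((?A ^\<^sub>m m) $$ (v,u))^2)"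
    using A adj_pow_sym[OF sg]
    by (intro sum.cong refl) (auto simp: scalar_prod_def atLeast0LessThan power2_eq_square intro!: sum.cong)
  also have "\<dots> \<ge> (\<Sum>v<n. (Fw n E m v)^2 / real n)"
  proof (rule sum_mono)
    fix v assume "v \<in> {..<n}"
    have "(Fw n E m v)^2 \<le> real n * (\<Sum>u<n. ((?A ^\<^sub>m m) $$ (v,u))^2)"
      unfolding Fw_def using sum_sq_cs[where S="{..<n}" and x="\<lambda>u. (?A ^\<^sub>m m) $$ (v,u)"] by simp
    thus "(Fw n E m v)^2 / real n \<le> (\<Sum>u<n. ((?A ^\<^sub>m m) $$ (v,u))^2)"
      using n by (simp add: divide_le_eq mult.commute)
  qed
  finally show ?thesis by (simp add: sum_divide_distrib)
qed

lemma trace_lower: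
  assumes sg: "simple_graph n E" and conn: "connected_graph n E" and D: "D = diameter n E"
    and n: "n \<ge> 2"
  shows "mtrace (adj_mat n E ^\<^sub>m (j * D + j * D)) \<ge> (real n - 1) ^ (2 * j)"
proof -
  have t: "mtrace (adj_mat n E ^\<^sub>m (j * D + j * D)) \<ge> (\<Sum>v<n. (Fw n E (j*D) v)^2) / real n"
    using trace_double[OF sg] n by simp
  have s: "(\<Sum>v<n. (Fw n E (j*D) v)^2) \<ge> (\<Sum>v<n. ((real n - 1) ^ j)^2)"
  proof (rule sum_mono)
    fix v assume v: "v \<in> {..<n}"
    have "Fw n E (j*D) v \<ge> (real n - 1) ^ j"
      using Fw_chunk[where n=n and E=E and D=D and c="real n - 1" and v=v and j=j] Fw_diam[OF sg conn D n] v n by auto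
    moreover have "(real n - 1) ^ j \<ge> 0" using n by simp
    ultimately show "((real n - 1) ^ j)^2 \<le> (Fw n E (j*D) v)^2" by (intro power_mono) auto
  qed
  have d: "(\<Sum>v<n. (Fw n E (j*D) v)^2) / real n \<ge> (\<Sum>v<n. ((real n - 1) ^ j)^2) / real n"
    using n s by (intro divide_right_mono) auto
  have e: "(\<Sum>v<n. ((real n - 1) ^ j)^2) / real n = (real n - 1) ^ (2 * j)"
    using n by (simp add: power_mult[symmetric] mult.commute)
  show ?thesis using t d e by linarith
qed



lemma exp_strict: "x \<noteq> 0 \<Longrightarrow> 1 + x < exp (x::real)"
proof -
  assume x: "x \<noteq> 0"
  show ?thesis
  proof (cases "1 + x / 2 \<ge> 0")
    case True
    have "(1 + x/2)^2 \<le> (exp (x/2))^2"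
      using True exp_ge_add_one_self[of "x/2"] by (intro power_mono) auto
    also have "(exp (x/2))^2 = exp x" by (simp add: power2_eq_square flip: exp_add)
    finally have "(1 + x/2)^2 \<le> exp x" .
    moreover have "1 + x < (1 + x/2)^2" using x by (simp add: power2_eq_square field_simps) (metis not_real_square_gt_zero)
    ultimately show ?thesis by linarith
  next
    case False
    then have "1 + x < 0" by simp
    thus ?thesis using exp_gt_zero[of x] by linarith
  qed
qed

lemma exp_minus_mono:
  assumes "0 \<le> R" "R \<le> L"
  shows "exp R - R \<le> exp L - (L::real)"
proof -
  have "exp L = exp R * exp (L - R)" by (simp flip: exp_add)
  also have "\<dots> \<ge> exp R * (1 + (L - R))"
    by (intro mult_left_mono) auto
  finally have "exp L \<ge> exp R + exp R * (L - R)" by (simp add: algebra_simps)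
  moreover have "exp R * (L - R) \<ge> 1 * (L - R)"
    using assms by (intro mult_right_mono) auto
  ultimately show ?thesis by simp
qed

lemma pow_limit:
  fixes x y c :: real
  assumes x: "0 \<le> x" and y: "0 < y" and c: "0 < c" and h: "\<And>j. y ^ j \<le> c * x ^ j"
  shows "y \<le> x"
proof (rule ccontr)
  assume "\<not> y \<le> x"
  hence xy: "x < y" by simp
  define q where "q = x / y"
  have q0: "0 \<le> q" and q1: "q < 1" using x y xy by (auto simp: q_def)
  have "(\<lambda>j. c * q ^ j) \<longlonglongrightarrow> c * 0"
    by (intro tendsto_mult tendsto_const LIMSEQ_power_zero) (use q0 q1 in auto)
  hence "eventually (\<lambda>j. c * q ^ j < 1) sequentially"
    by (intro order_tendstoD) auto
  then obtain j where j: "c * q ^ j < 1" by (auto simp: eventually_sequentially)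
  have "y ^ j \<le> c * x ^ j" by (rule h)
  hence "1 \<le> c * x ^ j / y ^ j" using y by (simp add: field_simps)
  also have "c * x ^ j / y ^ j = c * q ^ j" by (simp add: q_def power_divide)
  finally show False using j by simp
qed

lemma perron_list:
  fixes rs :: "real list"
  assumes ne: "rs \<noteq> []" and tr: "\<And>k. 0 \<le> (\<Sum>r\<leftarrow>rs. r ^ k)"
  shows "\<forall>r\<in>set rs. \<bar>r\<bar> \<le> Max (set rs)"
proof -
  define M where "M = Max (set rs)"
  define mu where "mu = Min (set rs)"
  have fin: "finite (set rs)" and sne: "set rs \<noteq> {}" using ne by auto
  have leM: "r \<le> M" and gemu: "mu \<le> r" if "r \<in> set rs" for r
    using that fin unfolding M_def mu_def by auto
  have muin: "mu \<in> set rs" unfolding mu_def using fin sne by (rule Min_in)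
  have key: "- mu \<le> M"
  proof (rule ccontr)
    assume "\<not> - mu \<le> M"
    define s where "s = - mu"
    have sM: "M < s" using \<open>\<not> - mu \<le> M\<close> by (simp add: s_def)
    have s0: "0 < s" using sM leM[OF muin] by (simp add: s_def)
    define t where "t = Max (insert 0 (abs ` (set rs - {mu})))"
    have tfin: "finite (insert 0 (abs ` (set rs - {mu})))" using fin by simp
    have t0: "0 \<le> t" unfolding t_def using tfin by (intro Max_ge) auto
    have tr_le: "\<bar>r\<bar> \<le> t" if "r \<in> set rs" "r \<noteq> mu" for r
      unfolding t_def using tfin that by (intro Max_ge) auto
    have ts: "t < s"
    proof -
      have "t \<in> insert 0 (abs ` (set rs - {mu}))" unfolding t_def using tfin by (intro Max_in) auto
      moreover have "\<bar>r\<bar> < s" if "r \<in> set rs" "r \<noteq> mu" for r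
      proof -
        have "mu < r" using gemu[OF that(1)] that(2) by simp
        moreover have "r < s" using leM[OF that(1)] sM by simp
        ultimately show ?thesis by (simp add: s_def abs_less_iff)
      qed
      ultimately show ?thesis using s0 by auto
    qed
    define N where "N = real (length rs)"
    have "(\<lambda>m. N * (t / s) ^ m) \<longlonglongrightarrow> N * 0"
      by (intro tendsto_mult tendsto_const LIMSEQ_power_zero) (use t0 s0 ts in auto)
    hence "eventually (\<lambda>m. N * (t / s) ^ m < 1) sequentially"
      by (intro order_tendstoD) auto
    then obtain m0 where m0: "\<And>m. m \<ge> m0 \<Longrightarrow> N * (t / s) ^ m < 1"
      by (auto simp: eventually_sequentially)
    define m where "m = Suc (2 * m0)"
    have "N * (t / s) ^ m < 1" using m0[of m] by (simp add: m_def)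
    hence Nt: "N * t ^ m < s ^ m" using s0 by (simp add: power_divide field_simps)
    have odd: "odd m" by (simp add: m_def)
    have bound: "r ^ m \<le> t ^ m - (if r = mu then s ^ m + t ^ m else 0)" if "r \<in> set rs" for r
    proof (cases "r = mu")
      case True
      then have "r = - s" by (simp add: s_def)
      then show ?thesis using odd True by (simp add: power_minus_odd)
    next
      case False
      have "r ^ m \<le> \<bar>r\<bar> ^ m" by (metis abs_ge_self power_abs)
      also have "\<dots> \<le> t ^ m" using tr_le[OF that False] by (intro power_mono) auto
      finally show ?thesis using False by simp
    qed
    have "(\<Sum>r\<leftarrow>rs. r ^ m) \<le> (\<Sum>r\<leftarrow>rs. t ^ m - (if r = mu then s ^ m + t ^ m else 0))"
      by (rule sum_list_mono) (rule bound)
    also have "\<dots> = N * t ^ m - (\<Sum>r\<leftarrow>rs. (if r = mu then s ^ m + t ^ m else 0))"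
      by (simp add: sum_list_subtractf sum_list_triv N_def)
    also have "(\<Sum>r\<leftarrow>rs. (if r = mu then s ^ m + t ^ m else 0)) \<ge> s ^ m + t ^ m"
    proof -
      have "s ^ m + t ^ m \<in> set (map (\<lambda>r. if r = mu then s ^ m + t ^ m else 0) rs)"
        using muin by force
      moreover have "\<forall>x\<in>set (map (\<lambda>r. if r = mu then s ^ m + t ^ m else 0) rs). 0 \<le> x"
        using s0 t0 by auto
      ultimately show ?thesis by (intro member_le_sum_list) auto
    qed
    hence "N * t ^ m - (\<Sum>r\<leftarrow>rs. (if r = mu then s ^ m + t ^ m else 0)) \<le> N * t ^ m - (s ^ m + t ^ m)"
      by linarith
    finally have "(\<Sum>r\<leftarrow>rs. r ^ m) < 0" using Nt t0 by (smt (verit) zero_le_power)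
    thus False using tr[of m] by simp
  qed
  show ?thesis
  proof
    fix r assume r: "r \<in> set rs"
    show "\<bar>r\<bar> \<le> Max (set rs)" using leM[OF r] gemu[OF r] key unfolding M_def by linarith
  qed
qed



lemma final_list:
  fixes rs :: "real list"
  assumes len: "length rs = n" and n: "n \<ge> 2" and s0: "sum_list rs = 0"
    and lamR: "Max (set rs) \<ge> R" and R1: "R \<ge> 1"
  shows "sum_list (map exp rs) > exp R + (real n - 1) - R"
proof -
  define lam where "lam = Max (set rs)"
  have ne: "rs \<noteq> []" using len n by auto
  have lamin: "lam \<in> set rs" unfolding lam_def using ne by simp
  define rest where "rest = remove1 lam rs"
  have lenr: "length rest = n - 1" unfolding rest_def using lamin len by (simp add: length_remove1)
  have srs: "sum_list rs = lam + sum_list rest"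
    using sum_list_map_remove1[OF lamin, of "\<lambda>x. x"] unfolding rest_def by simp
  have ers: "sum_list (map exp rs) = exp lam + sum_list (map exp rest)"
    using sum_list_map_remove1[OF lamin, of exp] unfolding rest_def by simp
  have lampos: "lam > 0" using lamR R1 unfolding lam_def by simp
  obtain r0 where r0: "r0 \<in> set rest" "r0 \<noteq> 0"
  proof (rule ccontr)
    assume "\<not> thesis"
    with that have "\<forall>r\<in>set rest. r = 0" by blast
    hence "sum_list rest = 0" by (induction rest) auto
    thus False using srs s0 lampos by simp
  qed
  define rest2 where "rest2 = remove1 r0 rest"
  have e1: "sum_list (map exp rest) = exp r0 + sum_list (map exp rest2)"
    using sum_list_map_remove1[OF r0(1), of exp] unfolding rest2_def by simp
  have e2: "sum_list (map (\<lambda>r. 1 + r) rest) = (1 + r0) + sum_list (map (\<lambda>r. 1 + r) rest2)"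
    using sum_list_map_remove1[OF r0(1), of "\<lambda>r. 1 + r"] unfolding rest2_def by simp
  have "sum_list (map (\<lambda>r. 1 + r) rest2) \<le> sum_list (map exp rest2)"
    by (rule sum_list_mono) simp
  moreover have "1 + r0 < exp r0" using exp_strict r0(2) by simp
  ultimately have "sum_list (map (\<lambda>r. 1 + r) rest) < sum_list (map exp rest)" using e1 e2 by linarith
  moreover have "sum_list (map (\<lambda>r. 1 + r) rest) = real (n - 1) + sum_list rest"
    by (simp add: sum_list_addf sum_list_triv lenr)
  ultimately have "sum_list (map exp rs) > exp lam + (real n - 1) - lam"
    using ers srs s0 n by (simp add: of_nat_diff)
  moreover have "exp R - R \<le> exp lam - lam"
    using R1 lamR unfolding lam_def by (intro exp_minus_mono) auto
  ultimately show ?thesis by linarith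
qed

lemma proots_linear_prod: "proots (\<Prod>r\<leftarrow>rs. [:-r,1:]) = mset (rs :: real list)"
proof (induction rs)
  case Nil then show ?case by simp
next
  case (Cons a rs)
  have nz: "(\<Prod>r\<leftarrow>rs. [:-r,1:]) \<noteq> (0 :: real poly)"
    by (subst prod_list_zero_iff) auto
  have "proots (\<Prod>r\<leftarrow>a # rs. [:-r,1:]) = proots ([:-a,1:] * (\<Prod>r\<leftarrow>rs. [:-r,1:]))" by simp
  also have "\<dots> = proots [:-a,1:] + proots (\<Prod>r\<leftarrow>rs. [:-r,1:])"
    using nz by (intro proots_mult) auto
  finally show ?case using Cons by simp
qed


theorem mainTheorem4:
  fixes n :: nat and E :: "nat \<Rightarrow> nat \<Rightarrow> bool" and D :: nat
  assumes "simple_graph n E"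
    and "connected_graph n E"
    and "n \<ge> 2"
    and "D = diameter n E"
  shows "estrada_index n E > exp (root D (real n - 1)) + (real n - 1) - root D (real n - 1)"
proof -
  note sg = assms(1) and conn = assms(2) and n = assms(3) and Dd = assms(4)
  let ?A = "adj_mat n E"
  have A: "?A \<in> carrier_mat n n" by (rule adj_carrier)
  have sym: "\<And>i j. i < n \<Longrightarrow> j < n \<Longrightarrow> ?A $$ (i,j) = ?A $$ (j,i)"
    using sg by (simp add: adj_index simple_graph_def)
  obtain rs where len: "length rs = n" and cp: "char_poly ?A = (\<Prod>r\<leftarrow>rs. [:-r,1:])"
    and tr: "\<And>k. mtrace (?A ^\<^sub>m k) = (\<Sum>r\<leftarrow>rs. r^k)"
    using real_sym_spectrum[OF A sym] by blast
  have EE: "estrada_index n E = sum_list (map exp rs)"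
  proof -
    have "estrada_index n E = (\<Sum>\<mu>\<in>#mset rs. exp \<mu>)"
      unfolding estrada_index_def cp proots_linear_prod ..
    also have "\<dots> = sum_list (map exp rs)" by (induction rs) auto
    finally show ?thesis .
  qed
  have s0: "sum_list rs = 0" using tr[of 1] trace_adj[OF sg] by simp
  have nonneg: "0 \<le> (\<Sum>r\<leftarrow>rs. r^k)" for k using trace_pow_nonneg[of n E k] tr[of k] by simp
  have ne: "rs \<noteq> []" using len n by auto
  define lam where "lam = Max (set rs)"
  have per: "\<And>r. r \<in> set rs \<Longrightarrow> \<bar>r\<bar> \<le> lam"
    using perron_list[OF ne nonneg] unfolding lam_def by blast
  have lam0: "0 \<le> lam" using per[of "hd rs"] ne by (meson abs_ge_zero hd_in_set order_trans)
  have D1: "D \<ge> 1" using diam_pos[OF conn Dd n] .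
  have low: "((real n - 1)^2) ^ j \<le> real n * (lam ^ (2 * D)) ^ j" for j
  proof -
    have "((real n - 1)^2) ^ j = (real n - 1) ^ (2 * j)" by (rule power_mult[symmetric])
    also have "\<dots> \<le> mtrace (?A ^\<^sub>m (j * D + j * D))" by (rule trace_lower[OF sg conn Dd n])
    also have "\<dots> = (\<Sum>r\<leftarrow>rs. r ^ (j * D + j * D))" by (rule tr)
    also have "\<dots> \<le> (\<Sum>r\<leftarrow>rs. lam ^ (j * D + j * D))"
    proof (rule sum_list_mono)
      fix r assume r: "r \<in> set rs"
      have "r ^ (j * D + j * D) = \<bar>r\<bar> ^ (j * D + j * D)"
        by (simp add: power_even_abs)
      also have "\<dots> \<le> lam ^ (j * D + j * D)" using per[OF r] by (intro power_mono) auto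
      finally show "r ^ (j * D + j * D) \<le> lam ^ (j * D + j * D)" .
    qed
    also have "\<dots> = real n * (lam ^ (2 * D)) ^ j"
    proof -
      have "lam ^ (j * D + j * D) = (lam ^ (2 * D)) ^ j"
      proof -
        have "j * D + j * D = 2 * D * j" by simp
        thus ?thesis by (simp only: power_mult)
      qed
      thus ?thesis using len by (simp add: sum_list_triv)
    qed
    finally show ?thesis .
  qed
  have yy: "0 < (real n - 1)^2" using n by simp
  have xx: "0 \<le> lam ^ (2 * D)" using lam0 by simp
  have cc: "0 < real n" using n by simp
  have "(real n - 1)^2 \<le> lam ^ (2 * D)" by (rule pow_limit[OF xx yy cc low])
  moreover have eqD: "lam ^ (2 * D) = (lam ^ D)^2" by (metis mult.commute power_mult)
  ultimately have "(real n - 1)^2 \<le> (lam ^ D)^2" by (simp only: eqD)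
  hence lamD: "real n - 1 \<le> lam ^ D" by (rule power2_le_imp_le[OF _ zero_le_power[OF lam0]])
  define R where "R = root D (real n - 1)"
  have RD: "R ^ D = real n - 1" unfolding R_def using D1 n by (intro real_root_pow_pos2) auto
  have "R ^ D \<le> lam ^ D" using RD lamD by simp
  moreover obtain d where "D = Suc d" using D1 by (cases D) auto
  ultimately have Rlam: "R \<le> lam" using power_le_imp_le_base[OF _ lam0] by blast
  have R1: "1 \<le> R"
  proof -
    have "root D 1 \<le> root D (real n - 1)" using D1 n by (subst real_root_le_iff) auto
    thus ?thesis unfolding R_def using D1 by simp
  qed
  show ?thesis
    unfolding EE R_def[symmetric]
    using final_list[OF len n s0 _ R1] Rlam unfolding lam_def by simp
qed


end
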